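(* If $L$ is a d-reduced $\kappa$-frame, then for every $a\in L$ the congruence $\nabla_a$ is clear; equivalently, $L/\nabla_a$ is d-reduced.
   Context: $\kappa$ is a fixed regular cardinal; a $\kappa$-frame is a bounded distributive lattice having joins of all subsets of cardinality $<\kappa$ and satisfying the frame distributive law for such joins. A $\kappa$-ideal is a downset in which every subset of cardinality $<\kappa$ has an upper bound. A congruence is an equivalence relation that is a sub-$\kappa$-frame of $L\times L$. $\nabla_a=\{(x,y)\mid x\vee a=y\vee a\}$. For a $\kappa$-ideal $I$, $\partial_I=\{(a,b)\mid\forall x\in L:\ a\wedge x\in I\iff b\wedge x\in I\}$; a congruence is clear if it equals $\partial_I$ for some $\kappa$-ideal $I$. A $\kappa$-frame $M$ is d-reduced if $\mathfrak{D}_M=\{(a,b)\mid\forall x\in M:\ a\wedge x=0\iff b\wedge x=0\}$ is the diagonal. *)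

theory Defs
  imports Main
begin

definition is_lub :: "('a \<Rightarrow> 'a \<Rightarrow> bool) \<Rightarrow> 'a set \<Rightarrow> 'a set \<Rightarrow> 'a \<Rightarrow> bool" where
  "is_lub le L S x \<longleftrightarrow> x \<in> L \<and> (\<forall>s\<in>S. le s x) \<and> (\<forall>y\<in>L. (\<forall>s\<in>S. le s y) \<longrightarrow> le x y)"

definition is_glb :: "('a \<Rightarrow> 'a \<Rightarrow> bool) \<Rightarrow> 'a set \<Rightarrow> 'a set \<Rightarrow> 'a \<Rightarrow> bool" where
  "is_glb le L S x \<longleftrightarrow> x \<in> L \<and> (\<forall>s\<in>S. le x s) \<and> (\<forall>y\<in>L. (\<forall>s\<in>S. le y s) \<longrightarrow> le y x)"

definition fJoin :: "('a \<Rightarrow> 'a \<Rightarrow> bool) \<Rightarrow> 'a set \<Rightarrow> 'a set \<Rightarrow> 'a" where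
  "fJoin le L S = (THE x. is_lub le L S x)"

definition fjoin :: "('a \<Rightarrow> 'a \<Rightarrow> bool) \<Rightarrow> 'a set \<Rightarrow> 'a \<Rightarrow> 'a \<Rightarrow> 'a" where
  "fjoin le L x y = fJoin le L {x, y}"

definition fmeet :: "('a \<Rightarrow> 'a \<Rightarrow> bool) \<Rightarrow> 'a set \<Rightarrow> 'a \<Rightarrow> 'a \<Rightarrow> 'a" where
  "fmeet le L x y = (THE z. is_glb le L {x, y} z)"

definition fbot :: "('a \<Rightarrow> 'a \<Rightarrow> bool) \<Rightarrow> 'a set \<Rightarrow> 'a" where
  "fbot le L = fJoin le L {}"

definition ftop :: "('a \<Rightarrow> 'a \<Rightarrow> bool) \<Rightarrow> 'a set \<Rightarrow> 'a" where
  "ftop le L = (THE t. is_glb le L {} t)"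

definition small :: "'k rel \<Rightarrow> 'b set \<Rightarrow> bool" where
  "small \<kappa> S \<longleftrightarrow> ordLess2 (card_of S) \<kappa>"

definition kframe :: "'k rel \<Rightarrow> 'a set \<Rightarrow> ('a \<Rightarrow> 'a \<Rightarrow> bool) \<Rightarrow> bool" where
  "kframe \<kappa> L le \<longleftrightarrow>
     (\<forall>x\<in>L. le x x) \<and>
     (\<forall>x\<in>L. \<forall>y\<in>L. le x y \<and> le y x \<longrightarrow> x = y) \<and>
     (\<forall>x\<in>L. \<forall>y\<in>L. \<forall>z\<in>L. le x y \<and> le y z \<longrightarrow> le x z) \<and>
     (\<exists>t. is_glb le L {} t) \<and>
     (\<forall>x\<in>L. \<forall>y\<in>L. \<exists>z. is_glb le L {x, y} z) \<and>
     (\<forall>S. S \<subseteq> L \<and> small \<kappa> S \<longrightarrow> (\<exists>x. is_lub le L S x)) \<and>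
     (\<forall>x\<in>L. \<forall>y\<in>L. \<forall>z\<in>L.
        fmeet le L x (fjoin le L y z) = fjoin le L (fmeet le L x y) (fmeet le L x z)) \<and>
     (\<forall>a\<in>L. \<forall>S. S \<subseteq> L \<and> small \<kappa> S \<longrightarrow>
        fmeet le L a (fJoin le L S) = fJoin le L ((\<lambda>s. fmeet le L a s) ` S))"

text \<open>Congruence: an equivalence relation on L that is a sub-kappa-frame of L x L
  (closed under componentwise kappa-joins, binary meets and top; bottom = empty join).\<close>
definition kcongruence :: "'k rel \<Rightarrow> 'a set \<Rightarrow> ('a \<Rightarrow> 'a \<Rightarrow> bool) \<Rightarrow> 'a rel \<Rightarrow> bool" where
  "kcongruence \<kappa> L le \<theta> \<longleftrightarrow>
     equiv L \<theta> \<and>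
     (ftop le L, ftop le L) \<in> \<theta> \<and>
     (\<forall>p\<in>\<theta>. \<forall>q\<in>\<theta>. (fmeet le L (fst p) (fst q), fmeet le L (snd p) (snd q)) \<in> \<theta>) \<and>
     (\<forall>S. S \<subseteq> \<theta> \<and> small \<kappa> S \<longrightarrow> (fJoin le L (fst ` S), fJoin le L (snd ` S)) \<in> \<theta>)"

definition nabla :: "('a \<Rightarrow> 'a \<Rightarrow> bool) \<Rightarrow> 'a set \<Rightarrow> 'a \<Rightarrow> 'a rel" where
  "nabla le L a = {(x, y). x \<in> L \<and> y \<in> L \<and> fjoin le L x a = fjoin le L y a}"

definition kideal :: "'k rel \<Rightarrow> 'a set \<Rightarrow> ('a \<Rightarrow> 'a \<Rightarrow> bool) \<Rightarrow> 'a set \<Rightarrow> bool" where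
  "kideal \<kappa> L le I \<longleftrightarrow> I \<subseteq> L \<and>
     (\<forall>x\<in>I. \<forall>y\<in>L. le y x \<longrightarrow> y \<in> I) \<and>
     (\<forall>S. S \<subseteq> I \<and> small \<kappa> S \<longrightarrow> (\<exists>u\<in>I. \<forall>s\<in>S. le s u))"

definition partialI :: "('a \<Rightarrow> 'a \<Rightarrow> bool) \<Rightarrow> 'a set \<Rightarrow> 'a set \<Rightarrow> 'a rel" where
  "partialI le L I = {(a, b). a \<in> L \<and> b \<in> L \<and>
      (\<forall>x\<in>L. fmeet le L a x \<in> I \<longleftrightarrow> fmeet le L b x \<in> I)}"

definition clear :: "'k rel \<Rightarrow> 'a set \<Rightarrow> ('a \<Rightarrow> 'a \<Rightarrow> bool) \<Rightarrow> 'a rel \<Rightarrow> bool" where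
  "clear \<kappa> L le \<theta> \<longleftrightarrow> (\<exists>I. kideal \<kappa> L le I \<and> \<theta> = partialI le L I)"

definition dcong :: "('a \<Rightarrow> 'a \<Rightarrow> bool) \<Rightarrow> 'a set \<Rightarrow> 'a rel" where
  "dcong le M = {(a, b). a \<in> M \<and> b \<in> M \<and>
      (\<forall>x\<in>M. fmeet le M a x = fbot le M \<longleftrightarrow> fmeet le M b x = fbot le M)}"

definition d_reduced :: "('a \<Rightarrow> 'a \<Rightarrow> bool) \<Rightarrow> 'a set \<Rightarrow> bool" where
  "d_reduced le M \<longleftrightarrow> dcong le M = Id_on M"

text \<open>Quotient kappa-frame L/theta: carrier the equivalence classes, [x] <= [y] iff (x /\ y) theta x.\<close>
definition quot_le :: "('a \<Rightarrow> 'a \<Rightarrow> bool) \<Rightarrow> 'a set \<Rightarrow> 'a rel \<Rightarrow> 'a set \<Rightarrow> 'a set \<Rightarrow> bool" where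
  "quot_le le L \<theta> A B \<longleftrightarrow> (\<exists>x\<in>A. \<exists>y\<in>B. (fmeet le L x y, x) \<in> \<theta>)"

end

theory Submission
  imports Defs
begin
lemma fin_small: "Cinfinite \<kappa> \<Longrightarrow> finite S \<Longrightarrow> small \<kappa> S"
  unfolding small_def
  by (rule Cfinite_ordLess_Cinfinite) (auto simp: cfinite_def Field_card_of card_of_card_order_on)

lemma fmeet_eq: "is_glb le L {x,y} g \<Longrightarrow> (\<And>z. is_glb le L {x,y} z \<Longrightarrow> z = g) \<Longrightarrow> fmeet le L x y = g"
  unfolding fmeet_def by (rule the_equality)
lemma fbot_eq: "is_lub le L {} g \<Longrightarrow> (\<And>z. is_lub le L {} z \<Longrightarrow> z = g) \<Longrightarrow> fbot le L = g"
  unfolding fbot_def fJoin_def by (rule the_equality)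

locale kf =
  fixes \<kappa> :: "'k rel" and L :: "'a set" and le :: "'a \<Rightarrow> 'a \<Rightarrow> bool"
  assumes cinf: "Cinfinite \<kappa>" and fr: "kframe \<kappa> L le"
begin

abbreviation "meet \<equiv> fmeet le L"
abbreviation "join \<equiv> fjoin le L"
abbreviation "bt \<equiv> fbot le L"

lemmas K = fr[unfolded kframe_def]
lemma refl: "x \<in> L \<Longrightarrow> le x x" using K[THEN conjunct1] by blast
lemma antisym: "x \<in> L \<Longrightarrow> y \<in> L \<Longrightarrow> le x y \<Longrightarrow> le y x \<Longrightarrow> x = y"
  using K[THEN conjunct2, THEN conjunct1] by blast
lemma trans: "x \<in> L \<Longrightarrow> y \<in> L \<Longrightarrow> z \<in> L \<Longrightarrow> le x y \<Longrightarrow> le y z \<Longrightarrow> le x z"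
  using K[THEN conjunct2, THEN conjunct2, THEN conjunct1] by blast

lemma glb_unique: "is_glb le L S x \<Longrightarrow> is_glb le L S y \<Longrightarrow> x = y"
  unfolding is_glb_def using antisym by blast
lemma lub_unique: "is_lub le L S x \<Longrightarrow> is_lub le L S y \<Longrightarrow> x = y"
  unfolding is_lub_def using antisym by blast

lemma meet_glb: assumes "x \<in> L" "y \<in> L" shows "is_glb le L {x,y} (meet x y)"
proof -
  from K[THEN conjunct2, THEN conjunct2, THEN conjunct2, THEN conjunct2, THEN conjunct1] assms
  obtain z where "is_glb le L {x,y} z" by blast
  then show ?thesis unfolding fmeet_def using glb_unique by (metis theI)
qed

lemma lub_small: assumes "S \<subseteq> L" "small \<kappa> S" shows "is_lub le L S (fJoin le L S)"
proof -
  from K[THEN conjunct2, THEN conjunct2, THEN conjunct2, THEN conjunct2, THEN conjunct2, THEN conjunct1] assms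
  obtain z where "is_lub le L S z" by blast
  then show ?thesis unfolding fJoin_def using lub_unique by (metis theI)
qed

lemma join_lub: assumes "x \<in> L" "y \<in> L" shows "is_lub le L {x,y} (join x y)"
  unfolding fjoin_def using assms by (intro lub_small fin_small[OF cinf]) auto

lemma bot_lub: "is_lub le L {} bt"
  unfolding fbot_def using lub_small fin_small[OF cinf] by auto

lemma meet_in: "x \<in> L \<Longrightarrow> y \<in> L \<Longrightarrow> meet x y \<in> L" using meet_glb unfolding is_glb_def by blast
lemma meet_le1: "x \<in> L \<Longrightarrow> y \<in> L \<Longrightarrow> le (meet x y) x" using meet_glb unfolding is_glb_def by blast
lemma meet_le2: "x \<in> L \<Longrightarrow> y \<in> L \<Longrightarrow> le (meet x y) y" using meet_glb unfolding is_glb_def by blast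
lemma meet_gr: "x \<in> L \<Longrightarrow> y \<in> L \<Longrightarrow> z \<in> L \<Longrightarrow> le z x \<Longrightarrow> le z y \<Longrightarrow> le z (meet x y)"
  using meet_glb unfolding is_glb_def by blast
lemma join_in: "x \<in> L \<Longrightarrow> y \<in> L \<Longrightarrow> join x y \<in> L" using join_lub unfolding is_lub_def by blast
lemma join_ge1: "x \<in> L \<Longrightarrow> y \<in> L \<Longrightarrow> le x (join x y)" using join_lub unfolding is_lub_def by blast
lemma join_ge2: "x \<in> L \<Longrightarrow> y \<in> L \<Longrightarrow> le y (join x y)" using join_lub unfolding is_lub_def by blast
lemma join_le: "x \<in> L \<Longrightarrow> y \<in> L \<Longrightarrow> z \<in> L \<Longrightarrow> le x z \<Longrightarrow> le y z \<Longrightarrow> le (join x y) z"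
  using join_lub unfolding is_lub_def by blast
lemma bot_in: "bt \<in> L" using bot_lub unfolding is_lub_def by blast
lemma bot_le: "x \<in> L \<Longrightarrow> le bt x" using bot_lub unfolding is_lub_def by blast

lemma meet_comm: "meet x y = meet y x" unfolding fmeet_def by (simp add: insert_commute)
lemma join_comm: "join x y = join y x" unfolding fjoin_def by (simp add: insert_commute)

lemma distrib: "x \<in> L \<Longrightarrow> y \<in> L \<Longrightarrow> z \<in> L \<Longrightarrow> meet x (join y z) = join (meet x y) (meet x z)"
  using K[THEN conjunct2, THEN conjunct2, THEN conjunct2, THEN conjunct2, THEN conjunct2, THEN conjunct2, THEN conjunct1] by blast

lemma join_absorb: "u \<in> L \<Longrightarrow> a \<in> L \<Longrightarrow> le u a \<Longrightarrow> join u a = a"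
  by (meson antisym join_ge2 join_in join_le refl)

lemma join_eq_iff: "u \<in> L \<Longrightarrow> a \<in> L \<Longrightarrow> join u a = a \<longleftrightarrow> le u a"
  by (metis join_absorb join_ge1)

lemma le_meet_iff: "x \<in> L \<Longrightarrow> y \<in> L \<Longrightarrow> meet x y = x \<longleftrightarrow> le x y"
  by (metis antisym meet_gr meet_in meet_le1 meet_le2 refl)

lemma dual_distrib: assumes "x \<in> L" "y \<in> L" "a \<in> L"
  shows "meet (join x a) (join y a) = join (meet x y) a"
proof (rule antisym)
  have J: "join x a \<in> L" "join y a \<in> L" using assms by (auto intro: join_in)
  have M: "meet x y \<in> L" "meet y a \<in> L" "meet y x \<in> L" using assms by (auto intro: meet_in)
  have R: "join (meet x y) a \<in> L" using M assms by (auto intro: join_in)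
  show "meet (join x a) (join y a) \<in> L" using J by (rule meet_in)
  show "join (meet x y) a \<in> L" by (rule R)
  have e1: "meet (join x a) (join y a) = join (meet (join x a) y) (meet (join x a) a)"
    using distrib J assms by blast
  have e2: "meet (join x a) a = a" 
    using le_meet_iff[of a "join x a"] meet_comm[of "join x a" a] J assms join_ge2 by simp
  have e3: "meet (join x a) y = join (meet y x) (meet y a)" 
    using distrib[of y x a] assms meet_comm[of "join x a" y] by simp
  have l1: "le (meet y x) (join (meet x y) a)" 
    using join_ge1[OF M(1) assms(3)] meet_comm[of y x] by simp
  have l2: "le (meet y a) (join (meet x y) a)" 
    using trans[OF M(2) assms(3) R meet_le2[OF assms(2,3)] join_ge2[OF M(1) assms(3)]] .
  have "le (join (meet y x) (meet y a)) (join (meet x y) a)"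
    using join_le[OF M(3) M(2) R l1 l2] .
  then show "le (meet (join x a) (join y a)) (join (meet x y) a)"
    using e1 e2 e3 join_le[OF _ assms(3) R _ join_ge2[OF M(1) assms(3)]] join_in[OF M(3) M(2)] by simp
  show "le (join (meet x y) a) (meet (join x a) (join y a))"
  proof (rule join_le[OF M(1) assms(3)])
    show "meet (join x a) (join y a) \<in> L" using J by (rule meet_in)
    show "le (meet x y) (meet (join x a) (join y a))"
      apply (rule meet_gr[OF J M(1)])
      apply (rule trans[OF M(1) assms(1) J(1) meet_le1[OF assms(1,2)] join_ge1[OF assms(1,3)]])
      by (rule trans[OF M(1) assms(2) J(2) meet_le2[OF assms(1,2)] join_ge1[OF assms(2,3)]])
    show "le a (meet (join x a) (join y a))"
      by (rule meet_gr[OF J assms(3)]) (auto intro: join_ge2 assms)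
  qed
qed


lemma ideal: "a \<in> L \<Longrightarrow> kideal \<kappa> L le {x\<in>L. le x a}"
  unfolding kideal_def using trans refl by blast

lemma meet_bot: assumes "u \<in> L" "le u bt" shows "u = bt"
  using antisym[OF assms(1) bot_in assms(2) bot_le[OF assms(1)]] .

lemma nabla_dir: assumes x: "x \<in> L" and y: "y \<in> L" and a: "a \<in> L" and z: "z \<in> L"
  and e: "join x a = join y a" and h: "le (meet x z) a"
  shows "le (meet y z) a"
proof -
  have jy: "join y a \<in> L" using y a by (rule join_in)
  have "le (meet y z) (meet (join y a) z)"
    by (rule meet_gr[OF jy z meet_in[OF y z]])
       (auto intro: trans[OF meet_in[OF y z] y jy meet_le1[OF y z] join_ge1[OF y a]] meet_le2[OF y z])
  also have "meet (join y a) z = join (meet z x) (meet z a)"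
    using e distrib[OF z x a] meet_comm by metis
  finally have 1: "le (meet y z) (join (meet z x) (meet z a))" .
  have 2: "le (join (meet z x) (meet z a)) a"
    apply (rule join_le[OF meet_in[OF z x] meet_in[OF z a] a])
    using h meet_comm apply metis
    by (rule meet_le2[OF z a])
  show ?thesis using trans[OF meet_in[OF y z] join_in[OF meet_in[OF z x] meet_in[OF z a]] a 1 2] .
qed

lemma nabla_eq: assumes dr: "d_reduced le L" and a: "a \<in> L"
  shows "nabla le L a = partialI le L {x\<in>L. le x a}"
proof (rule set_eqI, clarify)
  fix x y
  show "(x, y) \<in> nabla le L a \<longleftrightarrow> (x, y) \<in> partialI le L {x\<in>L. le x a}"
  proof
    assume "(x, y) \<in> nabla le L a"
    then have x: "x \<in> L" and y: "y \<in> L" and e: "join x a = join y a" unfolding nabla_def by auto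
    show "(x, y) \<in> partialI le L {x\<in>L. le x a}"
      unfolding partialI_def using x y meet_in nabla_dir[OF x y a _ e] nabla_dir[OF y x a _ e[symmetric]] by auto
  next
    assume "(x, y) \<in> partialI le L {x\<in>L. le x a}"
    then have x: "x \<in> L" and y: "y \<in> L" and h: "\<And>w. w \<in> L \<Longrightarrow> le (meet x w) a \<longleftrightarrow> le (meet y w) a"
      unfolding partialI_def using meet_in by auto
    have side: "meet (join y a) w = bt" if yx: "y \<in> L" "x \<in> L" and hh: "le (meet x w) a \<Longrightarrow> le (meet y w) a"
      and w: "w \<in> L" and b: "meet (join x a) w = bt" for x y w
    proof -
      have jx: "join x a \<in> L" using yx a by (intro join_in)
      have "le (meet x w) (meet (join x a) w)"
        by (rule meet_gr[OF jx w meet_in[OF yx(2) w]])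
           (auto intro: trans[OF meet_in[OF yx(2) w] yx(2) jx meet_le1[OF yx(2) w] join_ge1[OF yx(2) a]] meet_le2[OF yx(2) w])
      then have "le (meet x w) bt" using b by simp
      then have "le (meet x w) a" using trans[OF meet_in[OF yx(2) w] bot_in a _ bot_le[OF a]] by blast
      then have ya: "le (meet y w) a" by (rule hh)
      have "le (meet a w) (meet (join x a) w)"
        by (rule meet_gr[OF jx w meet_in[OF a w]])
           (auto intro: trans[OF meet_in[OF a w] a jx meet_le1[OF a w] join_ge2[OF yx(2) a]] meet_le2[OF a w])
      then have aw: "le (meet a w) bt" using b by simp
      have "le (meet y w) (meet a w)"
        by (rule meet_gr[OF a w meet_in[OF yx(1) w] ya meet_le2[OF yx(1) w]])
      then have yw: "le (meet y w) bt" using trans[OF meet_in[OF yx(1) w] meet_in[OF a w] bot_in] aw by blast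
      have "meet (join y a) w = join (meet w y) (meet w a)"
        using distrib[OF w yx(1) a] meet_comm by metis
      also have "\<dots> = join (meet y w) (meet a w)" using meet_comm by metis
      finally have eq: "meet (join y a) w = join (meet y w) (meet a w)" .
      have "le (meet (join y a) w) bt"
        unfolding eq by (rule join_le[OF meet_in[OF yx(1) w] meet_in[OF a w] bot_in yw aw])
      then show ?thesis using meet_bot meet_in[OF join_in[OF yx(1) a] w] by blast
    qed
    have "(join x a, join y a) \<in> dcong le L"
      unfolding dcong_def using join_in[OF x a] join_in[OF y a] side[OF y x] side[OF x y] h by auto
    then have "join x a = join y a" using dr unfolding d_reduced_def by auto
    then show "(x, y) \<in> nabla le L a" unfolding nabla_def using x y by auto
  qed
qed


context fixes a assumes a: "a \<in> L"
begin

abbreviation "th \<equiv> nabla le L a"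
abbreviation "Q \<equiv> L // th"
abbreviation "qle \<equiv> quot_le le L th"
abbreviation "J x \<equiv> join x a"

lemma equiv_th: "equiv L th"
  unfolding equiv_def refl_on_def sym_def trans_def nabla_def by auto

lemma mem_cls: "x' \<in> th``{x} \<longleftrightarrow> x \<in> L \<and> x'\<in>L \<and> J x = J x'"
  unfolding nabla_def by auto

lemma cls_eq: "x \<in> L \<Longrightarrow> y \<in> L \<Longrightarrow> th``{x} = th``{y} \<longleftrightarrow> J x = J y"
  using eq_equiv_class_iff[OF equiv_th] unfolding nabla_def by auto

lemma qle_char: assumes x: "x \<in> L" and y: "y \<in> L"
  shows "qle (th``{x}) (th``{y}) \<longleftrightarrow> le (J x) (J y)"
proof -
  have key: "(meet x' y', x') \<in> th \<longleftrightarrow> le (J x') (J y')" if "x' \<in> L" "y' \<in> L" for x' y'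
  proof -
    have "(meet x' y', x') \<in> th \<longleftrightarrow> J (meet x' y') = J x'"
      unfolding nabla_def using meet_in that by auto
    also have "\<dots> \<longleftrightarrow> meet (J x') (J y') = J x'" using dual_distrib[OF that a] by simp
    also have "\<dots> \<longleftrightarrow> le (J x') (J y')" using le_meet_iff join_in that a by blast
    finally show ?thesis .
  qed
  show ?thesis
  proof
    assume "qle (th``{x}) (th``{y})"
    then obtain x' y' where xx: "x' \<in> th``{x}" and yy: "y' \<in> th``{y}" and m: "(meet x' y', x') \<in> th"
      unfolding quot_le_def by blast
    from xx have x': "x' \<in> L" "J x = J x'" by (simp_all only: mem_cls)
    from yy have y': "y' \<in> L" "J y = J y'" by (simp_all only: mem_cls)
    have "le (J x') (J y')" using key[OF x'(1) y'(1)] m by simp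
    then show "le (J x) (J y)" using x'(2) y'(2) by simp
  next
    assume "le (J x) (J y)"
    then show "qle (th``{x}) (th``{y})" unfolding quot_le_def using key[OF x y] mem_cls x y by blast
  qed
qed

lemma Q_cases: "A \<in> Q \<Longrightarrow> \<exists>x\<in>L. A = th``{x}"
  by (erule quotientE) blast

lemma cls_in: "x \<in> L \<Longrightarrow> th``{x} \<in> Q" by (rule quotientI)

lemma q_antisym: "A \<in> Q \<Longrightarrow> B \<in> Q \<Longrightarrow> qle A B \<Longrightarrow> qle B A \<Longrightarrow> A = B"
proof -
  assume A: "A \<in> Q" and B: "B \<in> Q" and h1: "qle A B" and h2: "qle B A"
  from Q_cases[OF A] obtain p where p: "p \<in> L" "A = th``{p}" by blast
  from Q_cases[OF B] obtain q where q: "q \<in> L" "B = th``{q}" by blast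
  have "le (J p) (J q)" "le (J q) (J p)" using h1 h2 qle_char[OF p(1) q(1)] qle_char[OF q(1) p(1)] p(2) q(2) by simp_all
  then have "J p = J q" using antisym join_in[OF p(1) a] join_in[OF q(1) a] by blast
  then show "A = B" using cls_eq[OF p(1) q(1)] p(2) q(2) by simp
qed

lemma q_glb_unique: "is_glb qle Q S x \<Longrightarrow> is_glb qle Q S y \<Longrightarrow> x = y"
  unfolding is_glb_def using q_antisym by blast
lemma q_lub_unique: "is_lub qle Q S x \<Longrightarrow> is_lub qle Q S y \<Longrightarrow> x = y"
  unfolding is_lub_def using q_antisym by blast

lemma qmeet: assumes x: "x \<in> L" and y: "y \<in> L"
  shows "fmeet qle Q (th``{x}) (th``{y}) = th``{meet x y}"
proof -
  have m: "meet x y \<in> L" using meet_in x y by blast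
  have jm: "J (meet x y) = meet (J x) (J y)" using dual_distrib[OF x y a] by simp
  have G: "is_glb qle Q {th``{x}, th``{y}} (th``{meet x y})"
    unfolding is_glb_def
  proof (intro conjI ballI impI)
    show "th``{meet x y} \<in> Q" using m by (rule cls_in)
    fix s assume "s \<in> {th``{x}, th``{y}}"
    then show "qle (th``{meet x y}) s"
    proof
      assume "s = th``{x}"
      then show ?thesis using qle_char[OF m x] jm meet_le1[OF join_in[OF x a] join_in[OF y a]] by simp
    next
      assume "s \<in> {th``{y}}"
      then show ?thesis using qle_char[OF m y] jm meet_le2[OF join_in[OF x a] join_in[OF y a]] by simp
    qed
  next
    fix C assume C: "C \<in> Q" and le2: "\<forall>s\<in>{th``{x}, th``{y}}. qle C s"
    from Q_cases[OF C] obtain z where z: "z \<in> L" "C = th``{z}" by blast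
    have "le (J z) (J x)" "le (J z) (J y)" using le2 z(2) qle_char[OF z(1) x] qle_char[OF z(1) y] by simp_all
    then have "le (J z) (J (meet x y))" unfolding jm using meet_gr[OF join_in[OF x a] join_in[OF y a] join_in[OF z(1) a]] by blast
    then show "qle C (th``{meet x y})" using z(2) qle_char[OF z(1) m] by simp
  qed
  show ?thesis by (rule fmeet_eq[OF G q_glb_unique[OF _ G]])
qed

lemma qbot: "fbot qle Q = th``{bt}"
proof -
  have G: "is_lub qle Q {} (th``{bt})"
    unfolding is_lub_def
  proof (intro conjI ballI impI)
    show "th``{bt} \<in> Q" using bot_in by (rule cls_in)
    fix C assume C: "C \<in> Q"
    from Q_cases[OF C] obtain z where z: "z \<in> L" "C = th``{z}" by blast
    have "J bt = a" using join_absorb[OF bot_in a bot_le[OF a]] .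
    then have "le (J bt) (J z)" using join_ge2[OF z(1) a] by simp
    then show "qle (th``{bt}) C" using z(2) qle_char[OF bot_in z(1)] by simp
  qed simp
  show ?thesis by (rule fbot_eq[OF G q_lub_unique[OF _ G]])
qed

lemma cls_bot: "u \<in> L \<Longrightarrow> th``{u} = th``{bt} \<longleftrightarrow> le u a"
  using cls_eq[OF _ bot_in] join_absorb[OF bot_in a bot_le[OF a]] join_eq_iff a by simp

lemma quot_dred: assumes dr: "d_reduced le L" shows "d_reduced qle Q"
  unfolding d_reduced_def
proof (rule set_eqI, clarify)
  fix A B
  show "(A, B) \<in> dcong qle Q \<longleftrightarrow> (A, B) \<in> Id_on Q"
  proof
    assume h: "(A, B) \<in> dcong qle Q"
    then have A: "A \<in> Q" and B: "B \<in> Q" unfolding dcong_def by auto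
    from Q_cases[OF A] obtain p where p: "p \<in> L" "A = th``{p}" by blast
    from Q_cases[OF B] obtain q where q: "q \<in> L" "B = th``{q}" by blast
    have "le (meet p w) a \<longleftrightarrow> le (meet q w) a" if w: "w \<in> L" for w
    proof -
      have "fmeet qle Q A (th``{w}) = fbot qle Q \<longleftrightarrow> fmeet qle Q B (th``{w}) = fbot qle Q"
        using h cls_in[OF w] unfolding dcong_def by auto
      then show ?thesis using qmeet[OF p(1) w] qmeet[OF q(1) w] p(2) q(2) qbot cls_bot[OF meet_in[OF p(1) w]] cls_bot[OF meet_in[OF q(1) w]] by simp
    qed
    then have "(p, q) \<in> partialI le L {x\<in>L. le x a}"
      unfolding partialI_def using p q meet_in by auto
    then have "(p, q) \<in> th" using nabla_eq[OF dr a] by simp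
    then have "J p = J q" unfolding nabla_def by simp
    then have "A = B" using p q cls_eq by simp
    then show "(A, B) \<in> Id_on Q" using A by auto
  next
    assume "(A, B) \<in> Id_on Q"
    then show "(A, B) \<in> dcong qle Q" unfolding dcong_def by auto
  qed
qed

end

end

theorem mainTheorem17:
  fixes \<kappa> :: "'k rel" and L :: "'a set" and le :: "'a \<Rightarrow> 'a \<Rightarrow> bool" and a :: 'a
  assumes "Card_order \<kappa>" and "Cinfinite \<kappa>" and "regularCard \<kappa>"
    and "kframe \<kappa> L le"
    and "d_reduced le L"
    and "a \<in> L"
  shows "clear \<kappa> L le (nabla le L a)
     \<and> d_reduced (quot_le le L (nabla le L a)) (L // nabla le L a)"
proof -
  interpret kf \<kappa> L le using assms by unfold_locales
  show ?thesis unfolding clear_def using ideal[OF assms(6)] nabla_eq[OF assms(5,6)] quot_dred[OF assms(6,5)] by blast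
qed

end
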